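(* Let $k>0$ be real, let $M=\begin{bmatrix} k-1 & k-1 & k\\ 1&0&0\\ 0&1&0\end{bmatrix}$ and $N_0=\begin{bmatrix} k-1 & 2k & 2k\\ 2 & 1-k & 2\\ \frac{2}{k} & \frac{2}{k} & -\frac{1}{k}(k^2+k-2)\end{bmatrix}$. For integers $n\ge1$ put $\mathbf{J}_n=M^n$ and $\mathbf{j}_n=N_0M^n$. Then for every integer $n\ge1$: $$\left(\mathbf{j}_{n+1}\right)^2=\left(\mathbf{j}_1\right)^2\mathbf{J}_{2n},\qquad \mathbf{j}_{2n+1}=\mathbf{J}_n\,\mathbf{j}_{n+1}.$$ *)

theory Defs
  imports "HOL-Analysis.Analysis"
begin

definition Mmat :: "real \<Rightarrow> real^3^3" where
  "Mmat k = vector [vector [k - 1, k - 1, k], vector [1, 0, 0], vector [0, 1, 0]]"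

definition N0mat :: "real \<Rightarrow> real^3^3" where
  "N0mat k = vector [vector [k - 1, 2 * k, 2 * k], vector [2, 1 - k, 2],
                     vector [2 / k, 2 / k, - (1 / k) * (k^2 + k - 2)]]"

primrec matpow :: "real^3^3 \<Rightarrow> nat \<Rightarrow> real^3^3" where
  "matpow A 0 = mat 1"
| "matpow A (Suc n) = matpow A n ** A"

definition Jmat :: "real \<Rightarrow> nat \<Rightarrow> real^3^3" where
  "Jmat k n = matpow (Mmat k) n"

definition jmat :: "real \<Rightarrow> nat \<Rightarrow> real^3^3" where
  "jmat k n = N0mat k ** matpow (Mmat k) n"

end

theory Submission
  imports Defs
begin

lemma comm:
  assumes "k \<noteq> 0"
  shows "N0mat k ** Mmat k = Mmat k ** N0mat k"
  using assms
  by (simp add: vec_eq_iff forall_3 matrix_matrix_mult_def sum_3 Mmat_def N0mat_def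
      field_simps power2_eq_square)

lemma matpow_add: "matpow A (m + n) = matpow A m ** matpow A n"
  by (induction n) (simp_all add: matrix_mul_assoc)

lemma comm_pow:
  assumes "A ** B = B ** A"
  shows "A ** matpow B n = matpow B n ** A"
proof (induction n)
  case 0 then show ?case by simp
next
  case (Suc n)
  have "A ** matpow B (Suc n) = (A ** matpow B n) ** B" by (simp add: matrix_mul_assoc)
  also have "\<dots> = matpow B n ** (A ** B)" using Suc by (simp add: matrix_mul_assoc)
  also have "\<dots> = matpow B (Suc n) ** A" using assms by (simp add: matrix_mul_assoc)
  finally show ?case .
qed

lemma swap4:
  fixes N P Q :: "real^3^3"
  assumes "N ** P = P ** N"
  shows "(N ** P) ** (N ** Q) = (N ** N) ** (P ** Q)"
proof -
  have "(N ** P) ** (N ** Q) = N ** ((P ** N) ** Q)" by (simp add: matrix_mul_assoc)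
  also have "\<dots> = N ** ((N ** P) ** Q)" using assms by simp
  finally show ?thesis by (simp add: matrix_mul_assoc)
qed

theorem mainTheorem6:
  fixes k :: real and n :: nat
  assumes "k > 0" and "n \<ge> 1"
  shows "jmat k (n + 1) ** jmat k (n + 1) = (jmat k 1 ** jmat k 1) ** Jmat k (2 * n)
       \<and> jmat k (2 * n + 1) = Jmat k n ** jmat k (n + 1)"
proof -
  let ?N = "N0mat k" and ?M = "Mmat k"
  have c: "\<And>m. ?N ** matpow ?M m = matpow ?M m ** ?N"
    using comm_pow[OF comm] assms by simp
  have "jmat k (n + 1) ** jmat k (n + 1) = ?N ** ?N ** matpow ?M (n+1+(n+1))"
    unfolding jmat_def swap4[OF c] matpow_add[symmetric] ..
  also have "\<dots> = (jmat k 1 ** jmat k 1) ** Jmat k (2 * n)"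
  proof -
    have e: "jmat k 1 ** jmat k 1 = ?N ** ?N ** matpow ?M (1+1)"
      unfolding jmat_def swap4[OF c] matpow_add[symmetric] ..
    have "n+1+(n+1) = (1+1) + 2*n" by simp
    then show ?thesis by (simp only: e Jmat_def matpow_add matrix_mul_assoc)
  qed
  finally have 1: "jmat k (n + 1) ** jmat k (n + 1) = (jmat k 1 ** jmat k 1) ** Jmat k (2 * n)" .
  have "Jmat k n ** jmat k (n + 1) = (matpow ?M n ** ?N) ** matpow ?M (n+1)"
    by (simp add: Jmat_def jmat_def matrix_mul_assoc)
  also have "\<dots> = ?N ** matpow ?M (n + (n+1))"
    by (simp only: c[symmetric] matpow_add matrix_mul_assoc)
  also have "n + (n+1) = 2*n+1" by simp
  finally have 2: "jmat k (2 * n + 1) = Jmat k n ** jmat k (n + 1)" by (simp add: jmat_def)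
  show ?thesis using 1 2 by simp
qed

end
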